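(* Let $R$ be a unital semiprime left Goldie ring, $X$ a nonempty set, and for each $x\in X$ let $\sigma_x$ be a ring automorphism of $R$ and $\delta_x$ a $\sigma_x$-derivation of $R$; let $S=R[X;\mathscr{G},\mathscr{D}]$ be the free skew extension with $\mathscr{G}=\{\sigma_x\}$, $\mathscr{D}=\{\delta_x\}$. Fix a linear order on $X$ and extend it to $\langle X\rangle$ as described in the context. Let $A$ be a nonzero ideal of $S$ and let $I$ be the additive subgroup of $R$ generated by the leading coefficients of the nonzero elements of $A$. Then (1) $I$ is a two-sided ideal of $R$; (2) $\sigma_x(I)\subseteq I$ for every $x\in X$; (3) if $M=\mathrm{ann}_R(I)$, then $\sigma_x(M)=M$ and $\delta_x(M)\subseteq M$ for every $x\in X$.
   Context: A $\sigma$-derivation is an additive map $\delta\colon R\to R$ with $\delta(ab)=\delta(a)b+\sigma(a)\delta(b)$. Let $\langle X\rangle$ be the free monoid on $X$. A free skew extension $S=R[X;\mathscr{G},\mathscr{D}]$ is a ring containing $R$ as a subring and $X$ as a subset, which is a free left $R$-module with basis $\langle X\rangle$, and in which $xr=\sigma_x(r)x+\delta_x(r)$ for all $x\in X$, $r\in R$. Given a linear order $\prec$ on $X$, extend it to $\langle X\rangle$ by: $x_{i_1}\cdots x_{i_k}\prec x_{j_1}\cdots x_{j_l}$ iff $k<l$, or $k=l$ and at the first position $s$ where $i_s\ne j_s$ one has $x_{i_s}\prec x_{j_s}$. Each nonzero $f=\sum_\Delta r_\Delta\Delta\in S$ ($r_\Delta\in R$, almost all zero) has leading term the largest $\Delta$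 with $r_\Delta\neq0$, and its coefficient is the leading coefficient of $f$. $\mathrm{ann}_R(I)=\{r\in R\mid rI=Ir=0\}$. A ring is left Goldie if it has no infinite direct sum of nonzero left ideals and has ACC on left annihilators. *)

theory Defs
  imports Main
begin

definition add_subgroup :: "'a::ring_1 set \<Rightarrow> bool" where
  "add_subgroup G \<longleftrightarrow> 0 \<in> G \<and> (\<forall>a\<in>G. \<forall>b\<in>G. a + b \<in> G) \<and> (\<forall>a\<in>G. - a \<in> G)"

definition left_ideal :: "'a::ring_1 set \<Rightarrow> bool" where
  "left_ideal L \<longleftrightarrow> add_subgroup L \<and> (\<forall>r a. a \<in> L \<longrightarrow> r * a \<in> L)"

definition two_sided_ideal :: "'a::ring_1 set \<Rightarrow> bool" where
  "two_sided_ideal J \<longleftrightarrow> add_subgroup J \<and> (\<forall>r a. a \<in> J \<longrightarrow> r * a \<in> J \<and> a * r \<in> J)"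

definition add_span :: "'a::ring_1 set \<Rightarrow> 'a set" where
  "add_span T = \<Inter> {G. add_subgroup G \<and> T \<subseteq> G}"

definition set_prod :: "'a::ring_1 set \<Rightarrow> 'a set \<Rightarrow> 'a set" where
  "set_prod A B = add_span {a * b | a b. a \<in> A \<and> b \<in> B}"

definition semiprime :: "'a::ring_1 itself \<Rightarrow> bool" where
  "semiprime _ \<longleftrightarrow> (\<forall>J::'a set. \<forall>n::nat. two_sided_ideal J \<and> n \<ge> 1 \<and>
      (((set_prod J) ^^ (n - 1)) J) = {0} \<longrightarrow> J = {0})"

definition left_ann :: "'a::ring_1 set \<Rightarrow> 'a set" where
  "left_ann T = {r. \<forall>t\<in>T. r * t = 0}"

definition left_Goldie :: "'a::ring_1 itself \<Rightarrow> bool" where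
  "left_Goldie _ \<longleftrightarrow>
     \<comment> \<open>no infinite direct sum of nonzero left ideals\<close>
     \<not> (\<exists>L :: nat \<Rightarrow> 'a set. (\<forall>n. left_ideal (L n) \<and> L n \<noteq> {0}) \<and>
          (\<forall>n a. (\<forall>i<n. a i \<in> L i) \<and> (\<Sum>i<n. a i) = 0 \<longrightarrow> (\<forall>i<n. a i = 0)))
   \<and> \<comment> \<open>ACC on left annihilators\<close>
     (\<forall>C :: nat \<Rightarrow> 'a set. (\<forall>n. \<exists>T. C n = left_ann T) \<and> (\<forall>n. C n \<subseteq> C (Suc n))
          \<longrightarrow> (\<exists>N. \<forall>m\<ge>N. C m = C N))"

definition ann :: "'a::ring_1 set \<Rightarrow> 'a set" where
  "ann I = {r. \<forall>i\<in>I. r * i = 0 \<and> i * r = 0}"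

definition ring_aut :: "('a::ring_1 \<Rightarrow> 'a) \<Rightarrow> bool" where
  "ring_aut \<sigma> \<longleftrightarrow> bij \<sigma> \<and> (\<forall>a b. \<sigma> (a + b) = \<sigma> a + \<sigma> b) \<and>
     (\<forall>a b. \<sigma> (a * b) = \<sigma> a * \<sigma> b) \<and> \<sigma> 1 = 1"

definition sigma_derivation :: "('a::ring_1 \<Rightarrow> 'a) \<Rightarrow> ('a \<Rightarrow> 'a) \<Rightarrow> bool" where
  "sigma_derivation \<sigma> \<delta> \<longleftrightarrow> (\<forall>a b. \<delta> (a + b) = \<delta> a + \<delta> b) \<and>
     (\<forall>a b. \<delta> (a * b) = \<delta> a * b + \<sigma> a * \<delta> b)"

definition ring_hom_class :: "('a::ring_1 \<Rightarrow> 'b::ring_1) \<Rightarrow> bool" where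
  "ring_hom_class f \<longleftrightarrow> (\<forall>a b. f (a + b) = f a + f b) \<and> (\<forall>a b. f (a * b) = f a * f b) \<and> f 1 = 1"

text \<open>The ring S is the type 's; R embeds via the injective ring homomorphism iota;
  X embeds via the injective map xi. Words of the free monoid are lists over X.\<close>

definition mon :: "('x \<Rightarrow> 's::ring_1) \<Rightarrow> 'x list \<Rightarrow> 's" where
  "mon \<xi> w = prod_list (map \<xi> w)"

definition represents :: "('r::ring_1 \<Rightarrow> 's::ring_1) \<Rightarrow> ('x \<Rightarrow> 's) \<Rightarrow> 'x set
    \<Rightarrow> ('x list \<Rightarrow> 'r) \<Rightarrow> 's \<Rightarrow> bool" where
  "represents \<iota> \<xi> X c s \<longleftrightarrow> finite {w. c w \<noteq> 0} \<and> {w. c w \<noteq> 0} \<subseteq> lists X \<and>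
     s = (\<Sum>w\<in>{w. c w \<noteq> 0}. \<iota> (c w) * mon \<xi> w)"

definition free_skew_ext :: "('r::ring_1 \<Rightarrow> 's::ring_1) \<Rightarrow> ('x \<Rightarrow> 's) \<Rightarrow> 'x set
    \<Rightarrow> ('x \<Rightarrow> 'r \<Rightarrow> 'r) \<Rightarrow> ('x \<Rightarrow> 'r \<Rightarrow> 'r) \<Rightarrow> bool" where
  "free_skew_ext \<iota> \<xi> X \<sigma> \<delta> \<longleftrightarrow>
     ring_hom_class \<iota> \<and> inj \<iota> \<and> inj_on \<xi> X \<and>
     (\<forall>s. \<exists>!c. represents \<iota> \<xi> X c s) \<and>
     (\<forall>x\<in>X. \<forall>r. \<xi> x * \<iota> r = \<iota> (\<sigma> x r) * \<xi> x + \<iota> (\<delta> x r))"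

definition coeffs :: "('r::ring_1 \<Rightarrow> 's::ring_1) \<Rightarrow> ('x \<Rightarrow> 's) \<Rightarrow> 'x set \<Rightarrow> 's \<Rightarrow> 'x list \<Rightarrow> 'r" where
  "coeffs \<iota> \<xi> X s = (THE c. represents \<iota> \<xi> X c s)"

definition strict_lin_order :: "'x set \<Rightarrow> ('x \<Rightarrow> 'x \<Rightarrow> bool) \<Rightarrow> bool" where
  "strict_lin_order X lt \<longleftrightarrow> (\<forall>a\<in>X. \<not> lt a a) \<and>
     (\<forall>a\<in>X. \<forall>b\<in>X. \<forall>c\<in>X. lt a b \<and> lt b c \<longrightarrow> lt a c) \<and>
     (\<forall>a\<in>X. \<forall>b\<in>X. a \<noteq> b \<longrightarrow> lt a b \<or> lt b a)"

definition deglex :: "('x \<Rightarrow> 'x \<Rightarrow> bool) \<Rightarrow> 'x list \<Rightarrow> 'x list \<Rightarrow> bool" where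
  "deglex lt u v \<longleftrightarrow> length u < length v \<or>
     (length u = length v \<and> (\<exists>k < length u. take k u = take k v \<and> lt (u ! k) (v ! k)))"

definition lead_term :: "('r::ring_1 \<Rightarrow> 's::ring_1) \<Rightarrow> ('x \<Rightarrow> 's) \<Rightarrow> 'x set
    \<Rightarrow> ('x \<Rightarrow> 'x \<Rightarrow> bool) \<Rightarrow> 's \<Rightarrow> 'x list" where
  "lead_term \<iota> \<xi> X lt s = (THE w. coeffs \<iota> \<xi> X s w \<noteq> 0 \<and>
      (\<forall>v. coeffs \<iota> \<xi> X s v \<noteq> 0 \<and> v \<noteq> w \<longrightarrow> deglex lt v w))"

definition lead_coeff_S :: "('r::ring_1 \<Rightarrow> 's::ring_1) \<Rightarrow> ('x \<Rightarrow> 's) \<Rightarrow> 'x set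
    \<Rightarrow> ('x \<Rightarrow> 'x \<Rightarrow> bool) \<Rightarrow> 's \<Rightarrow> 'r" where
  "lead_coeff_S \<iota> \<xi> X lt s = coeffs \<iota> \<xi> X s (lead_term \<iota> \<xi> X lt s)"

end

theory Submission
  imports Defs
begin


lemma add_span_sub: "add_subgroup (add_span T)"
  unfolding add_span_def add_subgroup_def by auto

lemma add_span_inc: "T \<subseteq> add_span T"
  unfolding add_span_def by auto

lemma add_span_least: "add_subgroup G \<Longrightarrow> T \<subseteq> G \<Longrightarrow> add_span T \<subseteq> G"
  unfolding add_span_def by auto

lemma add_subgroup_0: "add_subgroup {0}"
  unfolding add_subgroup_def by auto

lemma additive_span:
  fixes f :: "'a::ring_1 \<Rightarrow> 'b::ring_1"
  assumes add: "\<And>a b. f (a+b) = f a + f b" and G: "add_subgroup G"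
    and T: "\<And>t. t \<in> T \<Longrightarrow> f t \<in> G" and a: "a \<in> add_span T"
  shows "f a \<in> G"
proof -
  have f0: "f 0 = 0" using add[of 0 0] by simp
  have fneg: "f (- b) = - f b" for b
  proof -
    have "f b + f (- b) = 0" using add[of b "-b"] f0 by simp
    then show ?thesis by (simp add: add_eq_0_iff)
  qed
  have "add_subgroup {a. f a \<in> G}"
    using G unfolding add_subgroup_def by (auto simp: f0 fneg add)
  then have "add_span T \<subseteq> {a. f a \<in> G}"
    by (rule add_span_least) (use T in auto)
  then show ?thesis using a by auto
qed

lemma add_span_0: "add_span {0::'a::ring_1} = {0}"
  using add_span_least[OF add_subgroup_0, of "{0}"] add_span_sub[of "{0::'a}"]
  unfolding add_subgroup_def by auto

lemma semiprime_disj: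
  fixes J K :: "'a::ring_1 set"
  assumes sp: "semiprime TYPE('a)" and J: "two_sided_ideal J" and K: "two_sided_ideal K"
    and z: "\<And>k j. k \<in> K \<Longrightarrow> j \<in> J \<Longrightarrow> k * j = 0"
  shows "J \<inter> K = {0}"
proof -
  have JK: "two_sided_ideal (J \<inter> K)"
    using J K unfolding two_sided_ideal_def add_subgroup_def by auto
  have z0: "0 \<in> J \<inter> K" using JK unfolding two_sided_ideal_def add_subgroup_def by auto
  have "{a * b | a b. a \<in> J \<inter> K \<and> b \<in> J \<inter> K} = {0}"
    using z z0 by force
  then have "set_prod (J \<inter> K) (J \<inter> K) = {0}"
    unfolding set_prod_def by (simp add: add_span_0)
  then have P: "((set_prod (J \<inter> K)) ^^ (2 - 1)) (J \<inter> K) = {0}" by simp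
  have all: "\<forall>J::'a set. \<forall>n::nat. two_sided_ideal J \<and> n \<ge> 1 \<and>
      (((set_prod J) ^^ (n - 1)) J) = {0} \<longrightarrow> J = {0}"
    using sp unfolding semiprime_def by assumption
  have "two_sided_ideal (J \<inter> K) \<and> (2::nat) \<ge> 1 \<and> ((set_prod (J \<inter> K)) ^^ (2 - 1)) (J \<inter> K) = {0}"
    by (intro conjI JK P) simp
  then show ?thesis by (rule all[rule_format])
qed

lemma left_ann_ideal:
  assumes J: "two_sided_ideal J" shows "two_sided_ideal (left_ann J)"
  using J unfolding two_sided_ideal_def add_subgroup_def left_ann_def
  by (auto simp: distrib_right mult.assoc)

lemma ann_eq_left_ann:
  fixes J :: "'a::ring_1 set"
  assumes sp: "semiprime TYPE('a)" and J: "two_sided_ideal J"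
  shows "ann J = left_ann J"
proof
  show "ann J \<subseteq> left_ann J" unfolding ann_def left_ann_def by auto
  show "left_ann J \<subseteq> ann J"
  proof
    fix k assume k: "k \<in> left_ann J"
    have D: "J \<inter> left_ann J = {0}"
      by (rule semiprime_disj[OF sp J left_ann_ideal[OF J]]) (auto simp: left_ann_def)
    have "j * k = 0" if j: "j \<in> J" for j
    proof -
      have "j * k \<in> J" using J j unfolding two_sided_ideal_def by auto
      moreover have "j * k \<in> left_ann J" using left_ann_ideal[OF J] k unfolding two_sided_ideal_def by auto
      ultimately show ?thesis using D by auto
    qed
    then show "k \<in> ann J" using k unfolding ann_def left_ann_def by auto
  qed
qed

lemma deglex_irrefl:
  assumes "strict_lin_order X lt" "u \<in> lists X" shows "\<not> deglex lt u u"
  using assms unfolding deglex_def strict_lin_order_def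
  by (auto dest!: nth_mem)

lemma deglex_len: "deglex lt v w \<Longrightarrow> length v \<le> length w"
  unfolding deglex_def by auto

lemma deglex_lenI: "length v < length w \<Longrightarrow> deglex lt v w"
  unfolding deglex_def by auto

lemma deglex_Cons: "deglex lt v w \<Longrightarrow> deglex lt (x#v) (x#w)"
  unfolding deglex_def
  by (auto intro!: exI[where x="Suc _"])

lemma deglex_trans:
  assumes so: "strict_lin_order X lt" and X: "u \<in> lists X" "v \<in> lists X" "w \<in> lists X"
    and uv: "deglex lt u v" and vw: "deglex lt v w"
  shows "deglex lt u w"
proof (cases "length u < length v \<or> length v < length w")
  case True then show ?thesis using deglex_len[OF uv] deglex_len[OF vw] by (auto intro: deglex_lenI)
next
  case False
  then have l1: "length u = length v" and l2: "length v = length w"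
    using deglex_len[OF uv] deglex_len[OF vw] by auto
  from uv l1 obtain k1 where k1: "k1 < length u" "take k1 u = take k1 v" "lt (u!k1) (v!k1)"
    unfolding deglex_def by auto
  from vw l2 obtain k2 where k2: "k2 < length v" "take k2 v = take k2 w" "lt (v!k2) (w!k2)"
    unfolding deglex_def by auto
  have inX: "\<And>i. i < length u \<Longrightarrow> u!i \<in> X \<and> v!i \<in> X \<and> w!i \<in> X"
    using X l1 l2 by (simp add: in_lists_conv_set)
  have eqpre: "\<And>i k a b. i < k \<Longrightarrow> take k a = take k b \<Longrightarrow> a!i = b!i"
    by (metis nth_take)
  have tk: "\<And>k k' a b. k \<le> k' \<Longrightarrow> take k' a = take k' b \<Longrightarrow> take k a = take k b"
    by (metis min.absorb1 take_take)
  have trans: "\<And>a b c. a \<in> X \<Longrightarrow> b \<in> X \<Longrightarrow> c \<in> X \<Longrightarrow> lt a b \<Longrightarrow> lt b c \<Longrightarrow> lt a c"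
    using so unfolding strict_lin_order_def by blast
  consider "k1 < k2" | "k1 = k2" | "k2 < k1" by linarith
  then show ?thesis
  proof cases
    case 1
    have "take k1 u = take k1 w" using k1 tk[OF less_imp_le[OF 1] k2(2)] by simp
    moreover have "lt (u!k1) (w!k1)" using k1(3) eqpre[OF 1 k2(2)] by simp
    ultimately show ?thesis using k1(1) l1 l2 unfolding deglex_def by auto
  next
    case 2
    have "lt (u!k1) (w!k1)" using trans inX k1 k2 2 by blast
    then show ?thesis using k1 k2 2 l1 l2 unfolding deglex_def by auto
  next
    case 3
    have "take k2 u = take k2 w" using k2 tk[OF less_imp_le[OF 3] k1(2)] by simp
    moreover have "lt (u!k2) (w!k2)" using k2(3) eqpre[OF 3 k1(2)] by simp
    ultimately show ?thesis using k2(1) l1 l2 unfolding deglex_def by auto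
  qed
qed

lemma deglex_total:
  assumes so: "strict_lin_order X lt" and X: "u \<in> lists X" "v \<in> lists X" and ne: "u \<noteq> v"
  shows "deglex lt u v \<or> deglex lt v u"
proof (cases "length u = length v")
  case False then show ?thesis using deglex_lenI[of u v lt] deglex_lenI[of v u lt] by linarith
next
  case True
  have "\<exists>k<length u. u!k \<noteq> v!k" using ne True nth_equalityI by blast
  define k where "k = (LEAST k. k < length u \<and> u!k \<noteq> v!k)"
  have k: "k < length u" "u!k \<noteq> v!k" unfolding k_def
    using LeastI_ex[OF \<open>\<exists>k<length u. u!k \<noteq> v!k\<close>] by auto
  have "\<forall>i<k. u!i = v!i"
  proof (intro allI impI)
    fix i assume ik: "i < k"
    then have "\<not> (i < length u \<and> u!i \<noteq> v!i)" unfolding k_def by (rule not_less_Least)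
    with ik k(1) show "u!i = v!i" by simp
  qed
  then have tk: "take k u = take k v" using True k(1)
    by (intro nth_equalityI) auto
  have "u!k \<in> set u" "v!k \<in> set v" using k(1) True by auto
  then have "u!k \<in> X" "v!k \<in> X" using X by auto
  then have "lt (u!k) (v!k) \<or> lt (v!k) (u!k)" using so k(2) unfolding strict_lin_order_def by blast
  then show ?thesis using tk k(1) True unfolding deglex_def by auto
qed

lemma deglex_max:
  assumes so: "strict_lin_order X lt" and F: "finite F" "F \<noteq> {}" "F \<subseteq> lists X"
  shows "\<exists>w\<in>F. \<forall>v\<in>F. v \<noteq> w \<longrightarrow> deglex lt v w"
  using F
proof (induction F rule: finite_ne_induct)
  case (singleton x) then show ?case by auto
next
  case (insert x F)
  then obtain w where w: "w \<in> F" "\<forall>v\<in>F. v \<noteq> w \<longrightarrow> deglex lt v w" by auto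
  have xX: "x \<in> lists X" and wX: "w \<in> lists X" and FX: "F \<subseteq> lists X" using insert w by auto
  show ?case
  proof (cases "deglex lt x w")
    case True then show ?thesis using w by auto
  next
    case False
    then have xw: "deglex lt w x" using deglex_total[OF so wX xX] w insert by auto
    have "\<forall>v\<in>insert x F. v \<noteq> x \<longrightarrow> deglex lt v x"
    proof (intro ballI impI)
      fix v assume "v \<in> insert x F" "v \<noteq> x"
      then have "v \<in> F" by auto
      then show "deglex lt v x"
        using w(2) xw deglex_trans[OF so _ wX xX] FX by (cases "v = w") auto
    qed
    then show ?thesis by auto
  qed
qed



locale fse =
  fixes \<iota> :: "'r::ring_1 \<Rightarrow> 's::ring_1" and \<xi> :: "'x \<Rightarrow> 's" and X :: "'x set"
    and \<sigma> \<delta> :: "'x \<Rightarrow> 'r \<Rightarrow> 'r"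
  assumes aut: "\<forall>x\<in>X. ring_aut (\<sigma> x)"
    and der: "\<forall>x\<in>X. sigma_derivation (\<sigma> x) (\<delta> x)"
    and fse: "free_skew_ext \<iota> \<xi> X \<sigma> \<delta>"
begin

lemma iota_add: "\<iota> (a+b) = \<iota> a + \<iota> b"
  using fse by (simp add: free_skew_ext_def ring_hom_class_def)
lemma iota_mult: "\<iota> (a*b) = \<iota> a * \<iota> b"
  using fse by (simp add: free_skew_ext_def ring_hom_class_def)
lemma iota_0[simp]: "\<iota> 0 = 0" using iota_add[of 0 0] by simp
lemma iota_inj: "inj \<iota>" using fse by (simp add: free_skew_ext_def)
lemma comm: "x \<in> X \<Longrightarrow> \<xi> x * \<iota> r = \<iota> (\<sigma> x r) * \<xi> x + \<iota> (\<delta> x r)"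
  using fse by (simp add: free_skew_ext_def)
lemma uniq: "\<exists>!c. represents \<iota> \<xi> X c s"
  using fse by (simp add: free_skew_ext_def)

lemma sig_add: "x \<in> X \<Longrightarrow> \<sigma> x (a+b) = \<sigma> x a + \<sigma> x b"
  using aut by (simp add: ring_aut_def)
lemma sig_mult: "x \<in> X \<Longrightarrow> \<sigma> x (a*b) = \<sigma> x a * \<sigma> x b"
  using aut by (simp add: ring_aut_def)
lemma sig_bij: "x \<in> X \<Longrightarrow> bij (\<sigma> x)"
  using aut by (simp add: ring_aut_def)
lemma sig_0: "x \<in> X \<Longrightarrow> \<sigma> x 0 = 0" using sig_add[of x 0 0] by simp
lemma sig_eq0: "x \<in> X \<Longrightarrow> \<sigma> x a = 0 \<longleftrightarrow> a = 0"
  using sig_0[of x] sig_bij[of x] by (metis bij_pointE)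
lemma del_add: "x \<in> X \<Longrightarrow> \<delta> x (a+b) = \<delta> x a + \<delta> x b"
  using der by (simp add: sigma_derivation_def)
lemma del_0: "x \<in> X \<Longrightarrow> \<delta> x 0 = 0" using del_add[of x 0 0] by simp

definition val :: "('x list \<Rightarrow> 'r) \<Rightarrow> 's" where
  "val c = (\<Sum>w\<in>{w. c w \<noteq> 0}. \<iota> (c w) * mon \<xi> w)"

lemma rep_iff: "represents \<iota> \<xi> X c s \<longleftrightarrow> finite {w. c w \<noteq> 0} \<and> {w. c w \<noteq> 0} \<subseteq> lists X \<and> s = val c"
  unfolding represents_def val_def by simp

lemma coeffs_val: "finite {w. c w \<noteq> 0} \<Longrightarrow> {w. c w \<noteq> 0} \<subseteq> lists X \<Longrightarrow> coeffs \<iota> \<xi> X (val c) = c"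
  unfolding coeffs_def by (rule the1_equality[OF uniq]) (simp add: rep_iff)

lemma coeffs_rep: "finite {w. coeffs \<iota> \<xi> X s w \<noteq> 0} \<and> {w. coeffs \<iota> \<xi> X s w \<noteq> 0} \<subseteq> lists X
   \<and> s = val (coeffs \<iota> \<xi> X s)"
proof -
  have "represents \<iota> \<xi> X (THE c. represents \<iota> \<xi> X c s) s" by (rule theI'[OF uniq])
  then show ?thesis unfolding coeffs_def rep_iff by blast
qed

lemma val_superset: "finite F \<Longrightarrow> {w. c w \<noteq> 0} \<subseteq> F \<Longrightarrow> val c = (\<Sum>w\<in>F. \<iota> (c w) * mon \<xi> w)"
  unfolding val_def by (rule sum.mono_neutral_left) auto

lemma val_add: "finite {w. c w \<noteq> 0} \<Longrightarrow> finite {w. d w \<noteq> 0} \<Longrightarrow> val (\<lambda>w. c w + d w) = val c + val d"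
proof -
  assume fc: "finite {w. c w \<noteq> 0}" and fd: "finite {w. d w \<noteq> 0}"
  let ?F = "{w. c w \<noteq> 0} \<union> {w. d w \<noteq> 0}"
  have "val (\<lambda>w. c w + d w) = (\<Sum>w\<in>?F. \<iota> (c w + d w) * mon \<xi> w)"
    by (rule val_superset) (use fc fd in auto)
  also have "\<dots> = (\<Sum>w\<in>?F. \<iota> (c w) * mon \<xi> w) + (\<Sum>w\<in>?F. \<iota> (d w) * mon \<xi> w)"
    by (simp add: iota_add distrib_right sum.distrib)
  also have "\<dots> = val c + val d"
    using val_superset[of ?F c] val_superset[of ?F d] fc fd by auto
  finally show ?thesis .
qed

lemma val_zero[simp]: "val (\<lambda>w. 0) = 0" unfolding val_def by simp

lemma val_smult: "finite {w. c w \<noteq> 0} \<Longrightarrow> val (\<lambda>w. r * c w) = \<iota> r * val c"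
proof -
  assume fc: "finite {w. c w \<noteq> 0}"
  have "val (\<lambda>w. r * c w) = (\<Sum>w\<in>{w. c w \<noteq> 0}. \<iota> (r * c w) * mon \<xi> w)"
    by (rule val_superset) (use fc in auto)
  also have "\<dots> = \<iota> r * val c"
    by (simp add: val_def iota_mult sum_distrib_left mult.assoc)
  finally show ?thesis .
qed

lemma val_single: "val (\<lambda>v. if v = w then r else 0) = \<iota> r * mon \<xi> w"
  by (subst val_superset[of "{w}"]) auto

lemma supp_sum: "{u. (\<Sum>v\<in>F. e v u) \<noteq> 0} \<subseteq> (\<Union>v\<in>F. {u. e v u \<noteq> 0})"
proof
  fix u assume "u \<in> {u. (\<Sum>v\<in>F. e v u) \<noteq> 0}"
  then have "\<exists>v\<in>F. e v u \<noteq> 0" by (metis (mono_tags, lifting) mem_Collect_eq sum.neutral)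
  then show "u \<in> (\<Union>v\<in>F. {u. e v u \<noteq> 0})" by auto
qed

lemma val_sum: "finite F \<Longrightarrow> (\<And>v. v \<in> F \<Longrightarrow> finite {u. e v u \<noteq> 0}) \<Longrightarrow>
   val (\<lambda>u. \<Sum>v\<in>F. e v u) = (\<Sum>v\<in>F. val (e v))"
proof (induction F rule: finite_induct)
  case empty then show ?case by simp
next
  case (insert a F)
  have f: "finite {u. (\<Sum>v\<in>F. e v u) \<noteq> 0}"
  proof (rule finite_subset[OF supp_sum])
    show "finite (\<Union>v\<in>F. {u. e v u \<noteq> 0})" using insert by auto
  qed
  have "val (\<lambda>u. \<Sum>v\<in>insert a F. e v u) = val (\<lambda>u. e a u + (\<Sum>v\<in>F. e v u))"
    using insert by simp
  also have "\<dots> = val (e a) + val (\<lambda>u. \<Sum>v\<in>F. e v u)"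
    by (rule val_add) (use insert f in auto)
  finally show ?case using insert by simp
qed

lemma mon_Cons: "mon \<xi> (x#w) = \<xi> x * mon \<xi> w" by (simp add: mon_def)
lemma mon_Nil: "mon \<xi> [] = 1" by (simp add: mon_def)

definition shf :: "'x \<Rightarrow> ('x list \<Rightarrow> 'r) \<Rightarrow> 'x list \<Rightarrow> 'r" where
  "shf x e u = (case u of [] \<Rightarrow> 0 | y#v \<Rightarrow> if y = x then e v else 0)"

lemma shf_nz: "shf x e u \<noteq> 0 \<Longrightarrow> \<exists>v. u = x#v \<and> e v \<noteq> 0"
  unfolding shf_def by (auto split: list.splits if_splits)

lemma shf_Cons[simp]: "shf x e (x#v) = e v" unfolding shf_def by simp

definition mlx :: "'x \<Rightarrow> ('x list \<Rightarrow> 'r) \<Rightarrow> 'x list \<Rightarrow> 'r" where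
  "mlx x d = (\<lambda>u. shf x (\<lambda>v. \<sigma> x (d v)) u + \<delta> x (d u))"

lemma mlx_nz: "x \<in> X \<Longrightarrow> mlx x d u \<noteq> 0 \<Longrightarrow> (\<exists>v. u = x#v \<and> d v \<noteq> 0) \<or> d u \<noteq> 0"
proof -
  assume x: "x \<in> X" and nz: "mlx x d u \<noteq> 0"
  show ?thesis
  proof (cases "d u = 0")
    case True
    then have "shf x (\<lambda>v. \<sigma> x (d v)) u \<noteq> 0" using nz del_0[OF x] unfolding mlx_def by simp
    then obtain v where "u = x#v" "\<sigma> x (d v) \<noteq> 0" using shf_nz by blast
    then show ?thesis using sig_0[OF x] by auto
  qed simp
qed

lemma mlx_supp: "x \<in> X \<Longrightarrow> {u. mlx x d u \<noteq> 0} \<subseteq> (Cons x) ` {w. d w \<noteq> 0} \<union> {w. d w \<noteq> 0}"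
proof (rule subsetI)
  fix u assume x: "x \<in> X" and "u \<in> {u. mlx x d u \<noteq> 0}"
  then have "(\<exists>v. u = x#v \<and> d v \<noteq> 0) \<or> d u \<noteq> 0" using mlx_nz[OF x] by simp
  then show "u \<in> (Cons x) ` {w. d w \<noteq> 0} \<union> {w. d w \<noteq> 0}" by auto
qed

lemma mulL: assumes x: "x \<in> X" and fd: "finite {w. d w \<noteq> 0}"
  shows "\<xi> x * val d = val (mlx x d)"
proof -
  let ?F = "{w. d w \<noteq> 0}"
  have "\<xi> x * val d = (\<Sum>v\<in>?F. \<xi> x * (\<iota> (d v) * mon \<xi> v))"
    by (simp add: val_def sum_distrib_left)
  also have "\<dots> = (\<Sum>v\<in>?F. \<iota> (\<sigma> x (d v)) * mon \<xi> (x#v) + \<iota> (\<delta> x (d v)) * mon \<xi> v)"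
    by (rule sum.cong) (auto simp: mult.assoc[symmetric] comm[OF x] distrib_right mon_Cons)
  also have "\<dots> = (\<Sum>v\<in>?F. \<iota> (\<sigma> x (d v)) * mon \<xi> (x#v)) + (\<Sum>v\<in>?F. \<iota> (\<delta> x (d v)) * mon \<xi> v)"
    by (simp add: sum.distrib)
  also have "(\<Sum>v\<in>?F. \<iota> (\<delta> x (d v)) * mon \<xi> v) = val (\<lambda>v. \<delta> x (d v))"
    by (rule val_superset[symmetric]) (use fd del_0[OF x] in auto)
  also have "(\<Sum>v\<in>?F. \<iota> (\<sigma> x (d v)) * mon \<xi> (x#v)) = (\<Sum>u\<in>(Cons x) ` ?F. \<iota> (shf x (\<lambda>v. \<sigma> x (d v)) u) * mon \<xi> u)"
    by (subst sum.reindex) (auto simp: inj_on_def)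
  also have "\<dots> = val (shf x (\<lambda>v. \<sigma> x (d v)))"
  proof (rule val_superset[symmetric])
    show "finite (Cons x ` ?F)" using fd by simp
    show "{w. shf x (\<lambda>v. \<sigma> x (d v)) w \<noteq> 0} \<subseteq> Cons x ` ?F"
      using shf_nz[of x "\<lambda>v. \<sigma> x (d v)"] sig_0[OF x] by force
  qed
  also have "val (shf x (\<lambda>v. \<sigma> x (d v))) + val (\<lambda>v. \<delta> x (d v)) = val (mlx x d)"
  proof -
    have "{u. shf x (\<lambda>v. \<sigma> x (d v)) u \<noteq> 0} \<subseteq> (Cons x) ` ?F"
      using shf_nz[of x "\<lambda>v. \<sigma> x (d v)"] sig_0[OF x] by force
    then have f1: "finite {u. shf x (\<lambda>v. \<sigma> x (d v)) u \<noteq> 0}" using fd finite_subset by blast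
    have f2: "finite {u. \<delta> x (d u) \<noteq> 0}"
      using fd del_0[OF x] by (metis (mono_tags, lifting) finite_subset mem_Collect_eq subsetI)
    show ?thesis unfolding mlx_def by (rule val_add[symmetric, OF f1 f2])
  qed
  finally show ?thesis .
qed

fun sig :: "'x list \<Rightarrow> 'r \<Rightarrow> 'r" where
  "sig [] r = r"
| "sig (x#w) r = \<sigma> x (sig w r)"

lemma sig_surj: "w \<in> lists X \<Longrightarrow> \<exists>r'. sig w r' = r"
proof (induction w arbitrary: r)
  case Nil then show ?case by simp
next
  case (Cons x w)
  then have x: "x \<in> X" and w: "w \<in> lists X" by auto
  obtain y where "\<sigma> x y = r" using sig_bij[OF x] by (metis bij_pointE)
  moreover obtain r' where "sig w r' = y" using Cons.IH[OF w] by blast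
  ultimately show ?case by auto
qed

lemma MR: "w \<in> lists X \<Longrightarrow> \<exists>d. finite {u. d u \<noteq> 0} \<and> {u. d u \<noteq> 0} \<subseteq> lists X \<and>
    (\<forall>u. d u \<noteq> 0 \<longrightarrow> length u < length w) \<and> mon \<xi> w * \<iota> r = \<iota> (sig w r) * mon \<xi> w + val d"
proof (induction w)
  case Nil then show ?case by (intro exI[of _ "\<lambda>_. 0"]) (simp add: mon_Nil)
next
  case (Cons x w)
  then have x: "x \<in> X" and w: "w \<in> lists X" by auto
  obtain d where d: "finite {u. d u \<noteq> 0}" "{u. d u \<noteq> 0} \<subseteq> lists X"
    "\<forall>u. d u \<noteq> 0 \<longrightarrow> length u < length w" "mon \<xi> w * \<iota> r = \<iota> (sig w r) * mon \<xi> w + val d"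
    using Cons.IH[OF w] by blast
  let ?s = "sig w r"
  define d' where "d' = mlx x d"
  define d'' where "d'' = (\<lambda>u. (if u = w then \<delta> x ?s else 0) + d' u)"
  have sd': "{u. d' u \<noteq> 0} \<subseteq> (Cons x) ` {w. d w \<noteq> 0} \<union> {w. d w \<noteq> 0}"
    unfolding d'_def by (rule mlx_supp[OF x])
  have fd': "finite {u. d' u \<noteq> 0}" using sd' d(1) finite_subset by blast
  have sd'': "{u. d'' u \<noteq> 0} \<subseteq> {w} \<union> {u. d' u \<noteq> 0}" unfolding d''_def by auto
  have "mon \<xi> (x#w) * \<iota> r = \<xi> x * (\<iota> ?s * mon \<xi> w + val d)"
    by (simp add: mon_Cons mult.assoc d(4))
  also have "\<dots> = (\<xi> x * \<iota> ?s) * mon \<xi> w + val d'"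
    by (simp add: distrib_left mult.assoc mulL[OF x d(1)] d'_def)
  also have "\<dots> = \<iota> (sig (x#w) r) * mon \<xi> (x#w) + (\<iota> (\<delta> x ?s) * mon \<xi> w + val d')"
    by (simp add: comm[OF x] distrib_right mult.assoc mon_Cons)
  also have "\<iota> (\<delta> x ?s) * mon \<xi> w + val d' = val d''"
    unfolding d''_def by (subst val_add) (auto simp: val_single fd' intro: finite_subset[of _ "{w}"])
  finally have eq: "mon \<xi> (x#w) * \<iota> r = \<iota> (sig (x#w) r) * mon \<xi> (x#w) + val d''" .
  show ?case
  proof (intro exI[of _ d''] conjI)
    show "finite {u. d'' u \<noteq> 0}" using sd'' fd' finite_subset by blast
    have A': "\<And>v. d v \<noteq> 0 \<Longrightarrow> v \<in> lists X" using d(2) by blast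
    have "insert w ((Cons x) ` {w. d w \<noteq> 0} \<union> {w. d w \<noteq> 0}) \<subseteq> lists X" using w x by (auto dest!: A')
    then show "{u. d'' u \<noteq> 0} \<subseteq> lists X" using sd'' sd' by blast
    show "\<forall>u. d'' u \<noteq> 0 \<longrightarrow> length u < length (x#w)"
      using sd'' sd' d(3) by fastforce
  qed (rule eq)
qed

end


context fse
begin

lemma LT1:
  assumes so: "strict_lin_order X lt" and fc: "finite {v. c v \<noteq> 0}" and sc: "{v. c v \<noteq> 0} \<subseteq> lists X"
    and cw: "c w \<noteq> 0" and mx: "\<And>v. c v \<noteq> 0 \<Longrightarrow> v \<noteq> w \<Longrightarrow> deglex lt v w"
  shows "lead_term \<iota> \<xi> X lt (val c) = w" "lead_coeff_S \<iota> \<xi> X lt (val c) = c w" "val c \<noteq> 0"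
proof -
  have C: "coeffs \<iota> \<xi> X (val c) = c" by (rule coeffs_val[OF fc sc])
  have wX: "w \<in> lists X" using sc cw by blast
  show 1: "lead_term \<iota> \<xi> X lt (val c) = w"
    unfolding lead_term_def C
  proof (rule the_equality)
    show "c w \<noteq> 0 \<and> (\<forall>v. c v \<noteq> 0 \<and> v \<noteq> w \<longrightarrow> deglex lt v w)" using cw mx by blast
  next
    fix w' assume H: "c w' \<noteq> 0 \<and> (\<forall>v. c v \<noteq> 0 \<and> v \<noteq> w' \<longrightarrow> deglex lt v w')"
    show "w' = w"
    proof (rule ccontr)
      assume ne: "w' \<noteq> w"
      have w'X: "w' \<in> lists X" using sc H by blast
      have "deglex lt w' w" using mx H ne by blast
      moreover have "deglex lt w w'" using H cw ne by blast
      ultimately have "deglex lt w w" using deglex_trans[OF so wX w'X wX] by blast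
      then show False using deglex_irrefl[OF so wX] by blast
    qed
  qed
  show "lead_coeff_S \<iota> \<xi> X lt (val c) = c w" by (simp add: lead_coeff_S_def 1 C)
  show "val c \<noteq> 0"
  proof
    assume "val c = 0"
    then have "coeffs \<iota> \<xi> X (val c) = coeffs \<iota> \<xi> X (val (\<lambda>_. 0))" by simp
    then have "c = (\<lambda>_. 0)" using C coeffs_val[of "\<lambda>_. 0"] by simp
    then show False using cw by simp
  qed
qed

lemma LT2:
  assumes so: "strict_lin_order X lt" and s: "s \<noteq> 0"
  shows "coeffs \<iota> \<xi> X s (lead_term \<iota> \<xi> X lt s) \<noteq> 0 \<and>
    (\<forall>v. coeffs \<iota> \<xi> X s v \<noteq> 0 \<and> v \<noteq> lead_term \<iota> \<xi> X lt s \<longrightarrow> deglex lt v (lead_term \<iota> \<xi> X lt s))"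
proof -
  let ?c = "coeffs \<iota> \<xi> X s"
  have fc: "finite {v. ?c v \<noteq> 0}" and sc: "{v. ?c v \<noteq> 0} \<subseteq> lists X" and sv: "s = val ?c"
    using coeffs_rep[of s] by auto
  have ne: "{v. ?c v \<noteq> 0} \<noteq> {}"
  proof
    assume "{v. ?c v \<noteq> 0} = {}"
    then have "?c = (\<lambda>_. 0)" by auto
    then have "s = 0" using sv by simp
    then show False using s by simp
  qed
  obtain w where w: "w \<in> {v. ?c v \<noteq> 0}" "\<forall>v\<in>{v. ?c v \<noteq> 0}. v \<noteq> w \<longrightarrow> deglex lt v w"
    using deglex_max[OF so fc ne sc] by blast
  have "lead_term \<iota> \<xi> X lt (val ?c) = w"
    by (rule LT1(1)[OF so fc sc]) (use w in auto)
  then have "lead_term \<iota> \<xi> X lt s = w" using sv by simp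
  then show ?thesis using w by auto
qed

lemma coeffs_smult:
  "coeffs \<iota> \<xi> X (\<iota> r * a) = (\<lambda>v. r * coeffs \<iota> \<xi> X a v)"
proof -
  let ?c = "coeffs \<iota> \<xi> X a"
  have fc: "finite {v. ?c v \<noteq> 0}" and sc: "{v. ?c v \<noteq> 0} \<subseteq> lists X" and sv: "a = val ?c"
    using coeffs_rep[of a] by auto
  have sub: "{v. r * ?c v \<noteq> 0} \<subseteq> {v. ?c v \<noteq> 0}" by auto
  have "\<iota> r * a = val (\<lambda>v. r * ?c v)" using val_smult[OF fc] sv by simp
  moreover have "coeffs \<iota> \<xi> X (val (\<lambda>v. r * ?c v)) = (\<lambda>v. r * ?c v)"
    by (rule coeffs_val) (use sub fc sc finite_subset in blast)+
  ultimately show ?thesis by simp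
qed

lemma coef0: "\<iota> r * a = 0 \<Longrightarrow> r * coeffs \<iota> \<xi> X a v = 0"
proof -
  assume "\<iota> r * a = 0"
  then have "(\<lambda>v. r * coeffs \<iota> \<xi> X a v) = coeffs \<iota> \<xi> X (val (\<lambda>_. 0))"
    using coeffs_smult[of r a] by simp
  also have "\<dots> = (\<lambda>_. 0)" using coeffs_val[of "\<lambda>_. 0"] by simp
  finally show ?thesis by metis
qed

end


context fse
begin

lemma main:
  assumes sp: "semiprime TYPE('r)" and gol: "left_Goldie TYPE('r)" and so: "strict_lin_order X lt"
    and A: "two_sided_ideal A"
  shows "two_sided_ideal (add_span {lead_coeff_S \<iota> \<xi> X lt a | a. a \<in> A \<and> a \<noteq> 0}) \<and>
    (\<forall>x\<in>X. \<sigma> x ` (add_span {lead_coeff_S \<iota> \<xi> X lt a | a. a \<in> A \<and> a \<noteq> 0})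
        \<subseteq> (add_span {lead_coeff_S \<iota> \<xi> X lt a | a. a \<in> A \<and> a \<noteq> 0})) \<and>
    (\<forall>x\<in>X. \<sigma> x ` ann (add_span {lead_coeff_S \<iota> \<xi> X lt a | a. a \<in> A \<and> a \<noteq> 0})
         = ann (add_span {lead_coeff_S \<iota> \<xi> X lt a | a. a \<in> A \<and> a \<noteq> 0}) \<and>
       \<delta> x ` ann (add_span {lead_coeff_S \<iota> \<xi> X lt a | a. a \<in> A \<and> a \<noteq> 0})
         \<subseteq> ann (add_span {lead_coeff_S \<iota> \<xi> X lt a | a. a \<in> A \<and> a \<noteq> 0}))"
proof -
  define T where "T = {lead_coeff_S \<iota> \<xi> X lt a | a. a \<in> A \<and> a \<noteq> 0}"
  define I where "I = add_span T"
  let ?C = "coeffs \<iota> \<xi> X" and ?LT = "lead_term \<iota> \<xi> X lt" and ?LC = "lead_coeff_S \<iota> \<xi> X lt"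
  have A_left: "\<And>r a. a \<in> A \<Longrightarrow> r * a \<in> A" and A_right: "\<And>r a. a \<in> A \<Longrightarrow> a * r \<in> A"
    using A unfolding two_sided_ideal_def by auto
  have Isub: "add_subgroup I" unfolding I_def by (rule add_span_sub)
  have TI: "T \<subseteq> I" unfolding I_def by (rule add_span_inc)
  have I0: "0 \<in> I" using Isub unfolding add_subgroup_def by auto
  have genI: "\<And>b. b \<in> A \<Longrightarrow> b \<noteq> 0 \<Longrightarrow> ?LC b \<in> I" using TI unfolding T_def by blast
  have lead: "?C a (?LT a) \<noteq> 0 \<and> (\<forall>v. ?C a v \<noteq> 0 \<and> v \<noteq> ?LT a \<longrightarrow> deglex lt v (?LT a))
      \<and> finite {v. ?C a v \<noteq> 0} \<and> {v. ?C a v \<noteq> 0} \<subseteq> lists X \<and> a = val (?C a)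
      \<and> ?LC a = ?C a (?LT a)" if "a \<noteq> 0" for a
    using LT2[OF so that] coeffs_rep[of a] by (simp add: lead_coeff_S_def)
  have Tcases: "\<exists>a. a \<in> A \<and> a \<noteq> 0 \<and> t = ?LC a" if "t \<in> T" for t
    using that unfolding T_def by blast
  have lenle: "length v \<le> length (?LT a)" if "a \<noteq> 0" "?C a v \<noteq> 0" for a v
    using lead[OF that(1)] that(2) deglex_len by (cases "v = ?LT a") auto

  have L1: "r * t \<in> I" if t: "t \<in> T" for r t
  proof -
    obtain a where a: "a \<in> A" "a \<noteq> 0" "t = ?LC a" using Tcases[OF t] by blast
    define c where "c = ?C a"
    define w where "w = ?LT a"
    have cw: "c w \<noteq> 0" and mx: "\<And>v. c v \<noteq> 0 \<Longrightarrow> v \<noteq> w \<Longrightarrow> deglex lt v w"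
      and fc: "finite {v. c v \<noteq> 0}" and sc: "{v. c v \<noteq> 0} \<subseteq> lists X" and av: "a = val c"
      and tc: "t = c w"
      using lead[OF a(2)] a(3) unfolding c_def w_def by auto
    show ?thesis
    proof (cases "r * c w = 0")
      case True then show ?thesis using I0 tc by simp
    next
      case False
      have sub: "{v. r * c v \<noteq> 0} \<subseteq> {v. c v \<noteq> 0}" by auto
      have fd: "finite {v. r * c v \<noteq> 0}" using sub fc finite_subset by blast
      have sd: "{v. r * c v \<noteq> 0} \<subseteq> lists X" using sub sc by blast
      have mx': "\<And>v. r * c v \<noteq> 0 \<Longrightarrow> v \<noteq> w \<Longrightarrow> deglex lt v w" using mx by force
      note R = LT1[OF so fd sd False mx']
      have "val (\<lambda>v. r * c v) = \<iota> r * a" using val_smult[OF fc] av by simp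
      then have "\<iota> r * a \<in> A" "\<iota> r * a \<noteq> 0" "?LC (\<iota> r * a) = r * t"
        using A_left[OF a(1)] R tc by auto
      then show ?thesis using genI by metis
    qed
  qed
  have I_left: "r * i \<in> I" if "i \<in> I" for r i
    by (rule additive_span[where f="\<lambda>i. r * i" and T=T, OF _ Isub L1]) (use that I_def in \<open>auto simp: distrib_left\<close>)

  have R1: "t * r \<in> I" if t: "t \<in> T" for r t
  proof -
    obtain a where a: "a \<in> A" "a \<noteq> 0" "t = ?LC a" using Tcases[OF t] by blast
    define c where "c = ?C a"
    define w where "w = ?LT a"
    have cw: "c w \<noteq> 0" and mx: "\<And>v. c v \<noteq> 0 \<Longrightarrow> v \<noteq> w \<Longrightarrow> deglex lt v w"
      and fc: "finite {v. c v \<noteq> 0}" and sc: "{v. c v \<noteq> 0} \<subseteq> lists X" and av: "a = val c"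
      and tc: "t = c w"
      using lead[OF a(2)] a(3) unfolding c_def w_def by auto
    have wX: "w \<in> lists X" using sc cw by blast
    have lle: "\<And>v. c v \<noteq> 0 \<Longrightarrow> length v \<le> length w"
      using lenle[OF a(2)] unfolding c_def w_def by blast
    obtain r' where r': "sig w r' = r" using sig_surj[OF wX] by blast
    have "\<forall>v\<in>lists X. \<exists>d. finite {u. d u \<noteq> 0} \<and> {u. d u \<noteq> 0} \<subseteq> lists X \<and>
      (\<forall>u. d u \<noteq> 0 \<longrightarrow> length u < length v) \<and> mon \<xi> v * \<iota> r' = \<iota> (sig v r') * mon \<xi> v + val d"
      using MR by blast
    then obtain D where D: "\<And>v. v \<in> lists X \<Longrightarrow> finite {u. D v u \<noteq> 0} \<and> {u. D v u \<noteq> 0} \<subseteq> lists X \<and>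
      (\<forall>u. D v u \<noteq> 0 \<longrightarrow> length u < length v) \<and> mon \<xi> v * \<iota> r' = \<iota> (sig v r') * mon \<xi> v + val (D v)"
      by metis
    define F where "F = {v. c v \<noteq> 0}"
    have FX: "\<And>v. v \<in> F \<Longrightarrow> v \<in> lists X" using sc F_def by blast
    have fF: "finite F" using fc F_def by simp
    have fD: "\<And>v. v \<in> F \<Longrightarrow> finite {u. c v * D v u \<noteq> 0}"
    proof -
      fix v assume "v \<in> F"
      then have "finite {u. D v u \<noteq> 0}" using D FX by blast
      moreover have "{u. c v * D v u \<noteq> 0} \<subseteq> {u. D v u \<noteq> 0}" by auto
      ultimately show "finite {u. c v * D v u \<noteq> 0}" using finite_subset by blast
    qed
    define e1 where "e1 = (\<lambda>v. c v * sig v r')"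
    define e2 where "e2 = (\<lambda>u. \<Sum>v\<in>F. c v * D v u)"
    define e where "e = (\<lambda>u. e1 u + e2 u)"
    have s1: "{v. e1 v \<noteq> 0} \<subseteq> F" unfolding e1_def F_def by auto
    have s2: "{u. e2 u \<noteq> 0} \<subseteq> (\<Union>v\<in>F. {u. D v u \<noteq> 0})"
    proof -
      have s2a: "{u. e2 u \<noteq> 0} \<subseteq> (\<Union>v\<in>F. {u. c v * D v u \<noteq> 0})"
        unfolding e2_def by (rule supp_sum)
      show ?thesis by (rule subset_trans[OF s2a]) auto
    qed
    have fUD: "finite (\<Union>v\<in>F. {u. D v u \<noteq> 0})" using fF D FX by blast
    have UDX: "(\<Union>v\<in>F. {u. D v u \<noteq> 0}) \<subseteq> lists X" using D FX by blast
    have f1: "finite {v. e1 v \<noteq> 0}" using s1 fF finite_subset by blast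
    have f2: "finite {v. e2 v \<noteq> 0}" using s2 fUD finite_subset by blast
    have se: "{u. e u \<noteq> 0} \<subseteq> F \<union> (\<Union>v\<in>F. {u. D v u \<noteq> 0})"
      using s1 s2 unfolding e_def by fastforce
    have fe: "finite {u. e u \<noteq> 0}" using se fF fUD finite_subset by blast
    have seX: "{u. e u \<noteq> 0} \<subseteq> lists X" using se FX UDX by blast
    have "a * \<iota> r' = (\<Sum>v\<in>F. \<iota> (c v) * (mon \<xi> v * \<iota> r'))"
      by (simp add: av val_def F_def sum_distrib_right mult.assoc)
    also have "\<dots> = (\<Sum>v\<in>F. \<iota> (e1 v) * mon \<xi> v + val (\<lambda>u. c v * D v u))"
    proof (rule sum.cong[OF refl])
      fix v assume v: "v \<in> F"
      have Dv: "mon \<xi> v * \<iota> r' = \<iota> (sig v r') * mon \<xi> v + val (D v)" and fv: "finite {u. D v u \<noteq> 0}"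
        using D[OF FX[OF v]] by auto
      show "\<iota> (c v) * (mon \<xi> v * \<iota> r') = \<iota> (e1 v) * mon \<xi> v + val (\<lambda>u. c v * D v u)"
        by (simp add: Dv e1_def distrib_left iota_mult mult.assoc val_smult[OF fv])
    qed
    also have "\<dots> = (\<Sum>v\<in>F. \<iota> (e1 v) * mon \<xi> v) + (\<Sum>v\<in>F. val (\<lambda>u. c v * D v u))"
      by (simp add: sum.distrib)
    also have "(\<Sum>v\<in>F. \<iota> (e1 v) * mon \<xi> v) = val e1"
      by (rule val_superset[symmetric, OF fF s1])
    also have "(\<Sum>v\<in>F. val (\<lambda>u. c v * D v u)) = val e2"
      unfolding e2_def by (rule val_sum[symmetric, OF fF fD])
    also have "val e1 + val e2 = val e"
      unfolding e_def by (rule val_add[symmetric, OF f1 f2])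
    finally have ae: "a * \<iota> r' = val e" .
    have e2w: "e2 w = 0"
      unfolding e2_def
    proof (rule sum.neutral, rule ballI)
      fix v assume v: "v \<in> F"
      have "D v w = 0"
      proof (rule ccontr)
        assume "D v w \<noteq> 0"
        then have "length w < length v" using D[OF FX[OF v]] by blast
        moreover have "length v \<le> length w" using lle v F_def by blast
        ultimately show False by simp
      qed
      then show "c v * D v w = 0" by simp
    qed
    have ew: "e w = t * r" unfolding e_def e1_def using e2w r' tc by simp
    show ?thesis
    proof (cases "t * r = 0")
      case True then show ?thesis using I0 by simp
    next
      case False
      have mx': "\<And>u. e u \<noteq> 0 \<Longrightarrow> u \<noteq> w \<Longrightarrow> deglex lt u w"
      proof -
        fix u assume eu: "e u \<noteq> 0" and uw: "u \<noteq> w"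
        show "deglex lt u w"
        proof (cases "c u = 0")
          case False then show ?thesis using mx uw by blast
        next
          case True
          then have "e2 u \<noteq> 0" using eu unfolding e_def e1_def by simp
          then obtain v where v: "v \<in> F" "D v u \<noteq> 0" using s2 by blast
          then have "length u < length v" using D[OF FX[OF v(1)]] by blast
          moreover have "length v \<le> length w" using lle v F_def by blast
          ultimately show ?thesis by (intro deglex_lenI) simp
        qed
      qed
      have ewnz: "e w \<noteq> 0" using ew False by simp
      note R = LT1[OF so fe seX ewnz mx']
      have "a * \<iota> r' \<in> A" by (rule A_right[OF a(1)])
      moreover have "a * \<iota> r' \<noteq> 0" "?LC (a * \<iota> r') = t * r" unfolding ae using R ew by auto
      ultimately show ?thesis using genI by metis
    qed
  qed
  have I_right: "i * r \<in> I" if "i \<in> I" for r i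
    by (rule additive_span[where f="\<lambda>i. i * r" and T=T, OF _ Isub R1]) (use that I_def in \<open>auto simp: distrib_right\<close>)
  have idealI: "two_sided_ideal I"
    unfolding two_sided_ideal_def using Isub I_left I_right by blast

  have S1: "\<sigma> x t \<in> I" if x: "x \<in> X" and t: "t \<in> T" for x t
  proof -
    obtain a where a: "a \<in> A" "a \<noteq> 0" "t = ?LC a" using Tcases[OF t] by blast
    define c where "c = ?C a"
    define w where "w = ?LT a"
    have cw: "c w \<noteq> 0" and mx: "\<And>v. c v \<noteq> 0 \<Longrightarrow> v \<noteq> w \<Longrightarrow> deglex lt v w"
      and fc: "finite {v. c v \<noteq> 0}" and sc: "{v. c v \<noteq> 0} \<subseteq> lists X" and av: "a = val c"
      and tc: "t = c w"
      using lead[OF a(2)] a(3) unfolding c_def w_def by auto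
    have lle: "\<And>v. c v \<noteq> 0 \<Longrightarrow> length v \<le> length w"
      using lenle[OF a(2)] unfolding c_def w_def by blast
    define e where "e = mlx x c"
    have be: "\<xi> x * a = val e" unfolding e_def av by (rule mulL[OF x fc])
    have se: "{u. e u \<noteq> 0} \<subseteq> (Cons x) ` {w. c w \<noteq> 0} \<union> {w. c w \<noteq> 0}"
      unfolding e_def by (rule mlx_supp[OF x])
    have fe: "finite {u. e u \<noteq> 0}" using se fc finite_subset by blast
    have cX: "\<And>v. c v \<noteq> 0 \<Longrightarrow> v \<in> lists X" using sc by blast
    have "(Cons x) ` {w. c w \<noteq> 0} \<union> {w. c w \<noteq> 0} \<subseteq> lists X" using x by (auto dest!: cX)
    then have seX: "{u. e u \<noteq> 0} \<subseteq> lists X" using se by blast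
    have cxw: "c (x#w) = 0" using lle[of "x#w"] by auto
    have ew: "e (x#w) = \<sigma> x t" unfolding e_def mlx_def using cxw del_0[OF x] tc by simp
    have ewnz: "e (x#w) \<noteq> 0" using ew sig_eq0[OF x] cw tc by simp
    have mx': "\<And>u. e u \<noteq> 0 \<Longrightarrow> u \<noteq> x#w \<Longrightarrow> deglex lt u (x#w)"
    proof -
      fix u assume eu: "e u \<noteq> 0" and uw: "u \<noteq> x#w"
      from mlx_nz[OF x eu[unfolded e_def]] show "deglex lt u (x#w)"
      proof
        assume "\<exists>v. u = x#v \<and> c v \<noteq> 0"
        then obtain v where v: "u = x#v" "c v \<noteq> 0" by blast
        then have "v \<noteq> w" using uw by blast
        then show ?thesis using mx v deglex_Cons by metis
      next
        assume "c u \<noteq> 0"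
        then have "length u \<le> length w" by (rule lle)
        then show ?thesis by (intro deglex_lenI) simp
      qed
    qed
    note R = LT1[OF so fe seX ewnz mx']
    have "\<xi> x * a \<in> A" by (rule A_left[OF a(1)])
    moreover have "\<xi> x * a \<noteq> 0" "?LC (\<xi> x * a) = \<sigma> x t" unfolding be using R ew by auto
    ultimately show ?thesis using genI by metis
  qed
  have sigI: "\<sigma> x i \<in> I" if x: "x \<in> X" and i: "i \<in> I" for x i
    by (rule additive_span[where f="\<sigma> x" and T=T, OF _ Isub S1[OF x]]) (use i I_def sig_add[OF x] in auto)

  define M where "M = left_ann I"
  have annM: "ann I = M" unfolding M_def by (rule ann_eq_left_ann[OF sp idealI])
  have Mideal: "two_sided_ideal M" unfolding M_def by (rule left_ann_ideal[OF idealI])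
  have disj: "I \<inter> M = {0}"
    by (rule semiprime_disj[OF sp idealI Mideal]) (auto simp: M_def left_ann_def)
  have Mr: "m * r \<in> M" if "m \<in> M" for m r using Mideal that unfolding two_sided_ideal_def by auto
  have kill: "\<iota> m * a = 0" if m: "m \<in> M" and a: "a \<in> A" for m a
  proof (rule ccontr)
    assume b: "\<iota> m * a \<noteq> 0"
    have bA: "\<iota> m * a \<in> A" using A_left[OF a] .
    have Cb: "?C (\<iota> m * a) = (\<lambda>v. m * ?C a v)" by (rule coeffs_smult)
    have "?LC (\<iota> m * a) = m * ?C a (?LT (\<iota> m * a))"
      unfolding lead_coeff_S_def Cb ..
    moreover have "?LC (\<iota> m * a) \<noteq> 0" using LT2[OF so b] unfolding lead_coeff_S_def by blast
    moreover have "?LC (\<iota> m * a) \<in> I" using genI[OF bA b] .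
    moreover have "m * ?C a (?LT (\<iota> m * a)) \<in> M" using Mr[OF m] .
    ultimately show False using disj by auto
  qed
  have Mchar: "m \<in> M \<longleftrightarrow> (\<forall>i\<in>I. m * i = 0)" for m unfolding M_def left_ann_def by simp

  have sigM: "\<sigma> x ` M = M" if x: "x \<in> X" for x
  proof -
    define s where "s = \<sigma> x"
    define P where "P n = s ^^ n" for n
    have smult: "s (a * b) = s a * s b" for a b unfolding s_def by (rule sig_mult[OF x])
    have s0: "s 0 = 0" unfolding s_def by (rule sig_0[OF x])
    have sbij: "bij s" unfolding s_def by (rule sig_bij[OF x])
    have sinj: "inj s" using sbij bij_is_inj by blast
    have sI: "i \<in> I \<Longrightarrow> s i \<in> I" for i unfolding s_def by (rule sigI[OF x])
    have Pmult: "P n (a * b) = P n a * P n b" for n a b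
      unfolding P_def by (induction n) (auto simp: smult)
    have P0: "P n 0 = 0" for n unfolding P_def by (induction n) (auto simp: s0)
    have Pinj: "inj (P n)" for n unfolding P_def using sinj by simp
    have PSuc: "P (Suc n) a = P n (s a)" for n a unfolding P_def by (simp only: funpow_Suc_right o_apply)
    have PI: "i \<in> I \<Longrightarrow> P n i \<in> I" for n i unfolding P_def by (induction n) (auto simp: sI)
    define C where "C n = left_ann (P n ` I)" for n
    have Cmono: "C n \<subseteq> C (Suc n)" for n
    proof
      fix r assume "r \<in> C n"
      then have H: "\<forall>i\<in>I. r * P n i = 0" unfolding C_def left_ann_def by auto
      show "r \<in> C (Suc n)" unfolding C_def left_ann_def using H sI by (auto simp: PSuc)
    qed
    have G: "\<forall>C :: nat \<Rightarrow> 'r set. (\<forall>n. \<exists>T. C n = left_ann T) \<and> (\<forall>n. C n \<subseteq> C (Suc n))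
          \<longrightarrow> (\<exists>N. \<forall>m\<ge>N. C m = C N)"
      using gol unfolding left_Goldie_def by (rule conjunct2)
    have "(\<forall>n. \<exists>T. C n = left_ann T) \<and> (\<forall>n. C n \<subseteq> C (Suc n))"
    proof (intro conjI allI)
      fix n show "\<exists>T. C n = left_ann T" by (rule exI[of _ "P n ` I"]) (simp add: C_def)
    next
      fix n show "C n \<subseteq> C (Suc n)" by (rule Cmono)
    qed
    then have "\<exists>N. \<forall>m\<ge>N. C m = C N" by (rule G[rule_format])
    then obtain N where N: "\<forall>m\<ge>N. C m = C N" by (elim exE)
    have CN: "C (Suc N) = C N" by (rule mp[OF spec[OF N, of "Suc N"]]) simp
    have sub1: "s m \<in> M" if m: "m \<in> M" for m
    proof -
      have "P (Suc N) m \<in> C (Suc N)"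
        unfolding C_def left_ann_def
      proof (clarify)
        fix i assume "i \<in> I"
        then have "m * i = 0" using m Mchar by blast
        then show "P (Suc N) m * P (Suc N) i = 0" by (metis Pmult P0)
      qed
      then have "P (Suc N) m \<in> C N" using CN by simp
      then have H: "\<forall>i\<in>I. P N (s m) * P N i = 0" unfolding C_def left_ann_def by (auto simp: PSuc)
      have "s m * i = 0" if "i \<in> I" for i
      proof -
        have "P N (s m * i) = P N 0" using H that by (simp add: Pmult P0)
        then show ?thesis using Pinj[of N] by (meson injD)
      qed
      then show ?thesis using Mchar by blast
    qed
    have sub2: "m \<in> s ` M" if m: "m \<in> M" for m
    proof -
      obtain y where y: "s y = m" using sbij by (metis bij_pointE)
      have "y * i = 0" if "i \<in> I" for i
      proof -
        have "s (y * i) = m * s i" using y smult by simp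
        also have "\<dots> = 0" using m Mchar sI that by blast
        finally have "s (y * i) = s 0" using s0 by simp
        then show ?thesis using sinj by (meson injD)
      qed
      then have "y \<in> M" using Mchar by blast
      then show ?thesis using y by blast
    qed
    show ?thesis using sub1 sub2 unfolding s_def by blast
  qed

  have delM: "\<delta> x m \<in> M" if x: "x \<in> X" and m: "m \<in> M" for x m
  proof -
    have smM: "\<sigma> x m \<in> M" using sigM[OF x] m by blast
    have D1: "\<delta> x m * t = 0" if t: "t \<in> T" for t
    proof -
      obtain a where a: "a \<in> A" "a \<noteq> 0" "t = ?LC a" using Tcases[OF t] by blast
      have "0 = \<xi> x * (\<iota> m * a)" using kill[OF m a(1)] by simp
      also have "\<dots> = \<iota> (\<sigma> x m) * (\<xi> x * a) + \<iota> (\<delta> x m) * a"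
        by (simp add: mult.assoc[symmetric] comm[OF x] distrib_right)
      also have "\<iota> (\<sigma> x m) * (\<xi> x * a) = 0" using kill[OF smM A_left[OF a(1)]] .
      finally have "\<iota> (\<delta> x m) * a = 0" by simp
      then show ?thesis using coef0 a(3) unfolding lead_coeff_S_def by blast
    qed
    have "\<delta> x m * i \<in> {0}" if "i \<in> I" for i
      by (rule additive_span[where f="\<lambda>i. \<delta> x m * i" and T=T, OF _ add_subgroup_0])
         (use that I_def D1 in \<open>auto simp: distrib_left\<close>)
    then show ?thesis using Mchar by blast
  qed

  show ?thesis
    unfolding T_def[symmetric] I_def[symmetric] annM
    using idealI sigI sigM delM by blast
qed

end



theorem proposition2:
  fixes \<iota> :: "'r::ring_1 \<Rightarrow> 's::ring_1"
    and \<xi> :: "'x \<Rightarrow> 's"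
    and X :: "'x set"
    and \<sigma> \<delta> :: "'x \<Rightarrow> 'r \<Rightarrow> 'r"
    and lt :: "'x \<Rightarrow> 'x \<Rightarrow> bool"
    and A :: "'s set"
  assumes "semiprime TYPE('r)"
    and "left_Goldie TYPE('r)"
    and "X \<noteq> {}"
    and "\<forall>x\<in>X. ring_aut (\<sigma> x)"
    and "\<forall>x\<in>X. sigma_derivation (\<sigma> x) (\<delta> x)"
    and "free_skew_ext \<iota> \<xi> X \<sigma> \<delta>"
    and "strict_lin_order X lt"
    and "two_sided_ideal A" and "A \<noteq> {0}"
  defines "I \<equiv> add_span {lead_coeff_S \<iota> \<xi> X lt a | a. a \<in> A \<and> a \<noteq> 0}"
  shows "two_sided_ideal I \<and>
    (\<forall>x\<in>X. \<sigma> x ` I \<subseteq> I) \<and>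
    (\<forall>x\<in>X. \<sigma> x ` ann I = ann I \<and> \<delta> x ` ann I \<subseteq> ann I)"
proof -
  interpret fse \<iota> \<xi> X \<sigma> \<delta> using assms(4,5,6) by unfold_locales
  show ?thesis unfolding I_def by (rule main[OF assms(1,2,7,8)])
qed


end
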